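(* For every $n\in\mathbb{N}$, $\mathcal{SG}(\mathcal{P}_n)=\mathcal{SG}(\mathcal{O}_n)$, where $\mathcal{P}_n$ denotes Grim played on the path with $n$ vertices and $\mathcal{O}_n$ denotes the octal game Octal $.6$ played on a single heap of $n$ chips. That is, the Sprague–Grundy sequence of Grim on paths coincides with the Sprague–Grundy sequence of Octal $.6$.
   Context: Grim is a two-player game on a finite simple undirected graph: any isolated vertices are deleted before play begins (so $\mathcal{P}_1$ has no moves); a move consists of selecting a vertex of the current graph and deleting it together with its incident edges, after which every vertex that has become isolated is also deleted; the last player to move wins. Octal $.6$ is played on a collection of heaps of chips: a move consists of choosing a heap, removing exactly one chip from it, and leaving the remaining chips of that heap as exactly one or exactly two non-empty heaps (so a heap of size $1$ admits no move); the last player to move wins. For a position $X$ of an impartial game, with $\mathcal{F}(X)$ its set of positions reachable in one move, the Sprague–Grundy value is defined recursively by $\mathcal{SG}(X)=\mathrm{mex}\{\mathcal{SG}(Y):Y\in\mathcal{F}(X)\}$, where $\mathrm{mex}$ of a set of non-negative integers is the least non-negative integer not in the set. *)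

theory Defs
  imports Main "HOL-Library.Multiset"
begin

definition mex :: "nat set \<Rightarrow> nat" where
  "mex S = (LEAST k. k \<notin> S)"

text \<open>An impartial game is given by its move relation R: (Y, X) \<in> R iff Y is
  reachable from X in one move (so F(X) = {Y. (Y,X) \<in> R}).\<close>
definition SG :: "('p \<times> 'p) set \<Rightarrow> 'p \<Rightarrow> nat" where
  "SG R = wfrec R (\<lambda>f x. mex (f ` {y. (y, x) \<in> R}))"

text \<open>A graph is a pair (V, E) of a vertex set and a set of edges, each edge being
  a two-element set of vertices.\<close>
type_synonym graph = "nat set \<times> nat set set"

definition del_isolated :: "graph \<Rightarrow> graph" where
  "del_isolated G = ({u \<in> fst G. \<exists>e \<in> snd G. u \<in> e}, snd G)"

definition del_vertex :: "nat \<Rightarrow> graph \<Rightarrow> graph" where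
  "del_vertex v G = (fst G - {v}, {e \<in> snd G. v \<notin> e})"

definition grim_moves :: "graph \<Rightarrow> graph set" where
  "grim_moves G = {del_isolated (del_vertex v G) | v. v \<in> fst G}"

definition grim_rel :: "(graph \<times> graph) set" where
  "grim_rel = {(H, G). finite (fst G) \<and> H \<in> grim_moves G}"

definition path_graph :: "nat \<Rightarrow> graph" where
  "path_graph n = ({..<n}, {{i, Suc i} | i. Suc i < n})"

definition grim_path :: "nat \<Rightarrow> graph" where
  "grim_path n = del_isolated (path_graph n)"

text \<open>A position is a multiset of heap sizes.  A move removes one chip from a heap
  and leaves the rest as exactly one or exactly two non-empty heaps.\<close>
definition octal6_moves :: "nat multiset \<Rightarrow> nat multiset set" where
  "octal6_moves M =
     {M - {#h#} + {#a#} | h a. h \<in># M \<and> a \<ge> 1 \<and> a + 1 = h}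
   \<union> {M - {#h#} + {#a, b#} | h a b. h \<in># M \<and> a \<ge> 1 \<and> b \<ge> 1 \<and> a + b + 1 = h}"

definition octal6_rel :: "(nat multiset \<times> nat multiset) set" where
  "octal6_rel = {(N, M). N \<in> octal6_moves M}"

definition octal_heap :: "nat \<Rightarrow> nat multiset" where
  "octal_heap n = (if n = 0 then {#} else {#n#})"

end

theory Submission
  imports Defs
begin


lemma SG_eq: "wf R \<Longrightarrow> SG R x = mex (SG R ` {y. (y,x)\<in>R})"
  unfolding SG_def
  apply (subst wfrec, assumption)
  apply (rule arg_cong[where f=mex])
  apply (rule image_cong, simp)
  apply (simp add: cut_apply)
  done

lemma SG_bisim:
  assumes w1: "wf R1" and w2: "wf R2"
  and f: "\<And>x y x'. B x y \<Longrightarrow> (x',x)\<in>R1 \<Longrightarrow> \<exists>y'. (y',y)\<in>R2 \<and> B x' y'"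
  and b: "\<And>x y y'. B x y \<Longrightarrow> (y',y)\<in>R2 \<Longrightarrow> \<exists>x'. (x',x)\<in>R1 \<and> B x' y'"
  shows "B x y \<Longrightarrow> SG R1 x = SG R2 y"
proof (induction x arbitrary: y rule: wf_induct_rule[OF w1])
  case (1 x)
  have "SG R1 ` {x'. (x',x)\<in>R1} = SG R2 ` {y'. (y',y)\<in>R2}"
  proof
    show "SG R1 ` {x'. (x',x)\<in>R1} \<subseteq> SG R2 ` {y'. (y',y)\<in>R2}"
    proof
      fix z assume "z \<in> SG R1 ` {x'. (x',x)\<in>R1}"
      then obtain x' where x': "(x',x)\<in>R1" "z = SG R1 x'" by auto
      obtain y' where "(y',y)\<in>R2" "B x' y'" using f[OF 1(2) x'(1)] by blast
      then show "z \<in> SG R2 ` {y'. (y',y)\<in>R2}" using 1(1)[OF x'(1)] x'(2) by auto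
    qed
    show "SG R2 ` {y'. (y',y)\<in>R2} \<subseteq> SG R1 ` {x'. (x',x)\<in>R1}"
    proof
      fix z assume "z \<in> SG R2 ` {y'. (y',y)\<in>R2}"
      then obtain y' where y': "(y',y)\<in>R2" "z = SG R2 y'" by auto
      obtain x' where "(x',x)\<in>R1" "B x' y'" using b[OF 1(2) y'(1)] by blast
      then show "z \<in> SG R1 ` {x'. (x',x)\<in>R1}" using 1(1)[of x' y'] y'(2) by force
    qed
  qed
  then show ?case by (simp add: SG_eq w1 w2)
qed



lemma wf_grim: "wf grim_rel"
proof (rule wf_subset[OF wf_measure[of "\<lambda>G. card (fst G)"]])
  show "grim_rel \<subseteq> measure (\<lambda>G. card (fst G))"
  proof
    fix x assume "x \<in> grim_rel"
    then obtain H G v where x: "x = (H,G)" "finite (fst G)" "v \<in> fst G"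
      "H = del_isolated (del_vertex v G)"
      unfolding grim_rel_def grim_moves_def by blast
    have "fst H \<subseteq> fst G - {v}" using x(4) by (auto simp: del_isolated_def del_vertex_def)
    then have "fst H \<subset> fst G" using x(3) by blast
    then show "x \<in> measure (\<lambda>G. card (fst G))" using x by (simp add: psubset_card_mono)
  qed
qed



lemma octal_dec: assumes "N \<in> octal6_moves M" shows "sum_mset N < sum_mset M"
proof -
  from assms consider (one) h a where "h \<in># M" "a + 1 = h" "N = M - {#h#} + {#a#}"
    | (two) h a b where "h \<in># M" "a + b + 1 = h" "N = M - {#h#} + {#a, b#}"
    unfolding octal6_moves_def by blast
  then show ?thesis
  proof cases
    case one
    have "sum_mset M = sum_mset (M - {#h#}) + h"
      using one(1) using sum_mset.remove[of h M] by simp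
    then show ?thesis using one by simp
  next
    case two
    have "sum_mset M = sum_mset (M - {#h#}) + h"
      using two(1) using sum_mset.remove[of h M] by simp
    then show ?thesis using two by simp
  qed
qed

lemma wf_octal: "wf octal6_rel"
proof (rule wf_subset[OF wf_measure[of "sum_mset"]])
  show "octal6_rel \<subseteq> measure sum_mset"
    using octal_dec unfolding octal6_rel_def by auto
qed


definition ind :: "nat set \<Rightarrow> graph" where
  "ind V = (V, {{i, Suc i} | i. i \<in> V \<and> Suc i \<in> V})"

definition noniso :: "nat set \<Rightarrow> nat set" where
  "noniso W = {u \<in> W. (\<exists>w\<in>W. u = Suc w) \<or> Suc u \<in> W}"

fun segV :: "nat \<times> nat \<Rightarrow> nat set" where
  "segV (s,l) = {s..<s+l}"

fun sep :: "nat \<times> nat \<Rightarrow> nat \<times> nat \<Rightarrow> bool" where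
  "sep (s,l) (t,m) = (l = 0 \<or> m = 0 \<or> s + l < t \<or> t + m < s)"

definition okS :: "(nat \<times> nat) multiset \<Rightarrow> bool" where
  "okS S = (\<forall>p\<in>#S. \<forall>q\<in>#(S - {#p#}). sep p q)"

definition UV :: "(nat \<times> nat) multiset \<Rightarrow> nat set" where
  "UV S = (\<Union>p\<in>set_mset S. segV p)"

lemma del_vertex_ind: "del_vertex v (ind V) = ind (V - {v})"
  unfolding del_vertex_def ind_def by auto

lemma del_isolated_ind: "del_isolated (ind V) = ind (noniso V)"
  unfolding del_isolated_def ind_def noniso_def by auto

lemma path_ind: "path_graph n = ind {..<n}"
  unfolding path_graph_def ind_def by auto

lemma sep_sym: "sep p q = sep q p"
  by (cases p; cases q) auto

lemma okS_empty[simp]: "okS {#}"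
  unfolding okS_def by simp

lemma okS_add_mset: "okS (add_mset x S) \<longleftrightarrow> okS S \<and> (\<forall>y\<in>#S. sep x y)"
proof
  assume a: "okS (add_mset x S)"
  have a': "\<And>p q. p \<in># add_mset x S \<Longrightarrow> q \<in># add_mset x S - {#p#} \<Longrightarrow> sep p q"
    using a unfolding okS_def by blast
  have "okS S" unfolding okS_def
  proof (intro ballI)
    fix p q assume p: "p \<in># S" and q: "q \<in># S - {#p#}"
    have "q \<in># add_mset x S - {#p#}" using q by (simp add: in_diff_count)
    then show "sep p q" using a' p by simp
  qed
  moreover have "\<forall>y\<in>#S. sep x y" using a' by simp
  ultimately show "okS S \<and> (\<forall>y\<in>#S. sep x y)" by blast
next
  assume b: "okS S \<and> (\<forall>y\<in>#S. sep x y)"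
  have b': "\<And>p q. p \<in># S \<Longrightarrow> q \<in># S - {#p#} \<Longrightarrow> sep p q"
    using b unfolding okS_def by blast
  show "okS (add_mset x S)" unfolding okS_def
  proof (intro ballI)
    fix p q assume p: "p \<in># add_mset x S" and q: "q \<in># add_mset x S - {#p#}"
    show "sep p q"
    proof (cases "p = x")
      case True
      then show ?thesis using b q by simp
    next
      case False
      then have pS: "p \<in># S" using p by simp
      have "add_mset x S - {#p#} = add_mset x (S - {#p#})" using False
        by (rule diff_union_swap[symmetric])
      then have "q = x \<or> q \<in># S - {#p#}" using q by simp
      then show ?thesis
      proof
        assume "q = x"
        moreover have "sep x p" using b pS by blast
        ultimately show ?thesis using sep_sym[of p x] by simp
      next
        assume "q \<in># S - {#p#}" then show ?thesis using b' pS by blast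
      qed
    qed
  qed
qed

lemma okS_filter: "okS S \<Longrightarrow> okS (filter_mset P S)"
  by (induction S) (auto simp: okS_add_mset)

lemma UV_simps[simp]: "UV {#} = {}" "UV (add_mset x S) = segV x \<union> UV S" "UV (A + B) = UV A \<union> UV B"
  unfolding UV_def by auto

lemma finite_UV: "finite (UV S)"
  unfolding UV_def by (induction S) auto



abbreviation big :: "nat \<times> nat \<Rightarrow> bool" where "big q \<equiv> 2 \<le> snd q"

lemma okS_diff: "okS S \<Longrightarrow> p \<in># S \<Longrightarrow> okS (S - {#p#}) \<and> (\<forall>y\<in>#S - {#p#}. sep p y)"
  using okS_add_mset[of p "S - {#p#}"] by simp

lemma sep_notin: "sep p y \<Longrightarrow> x \<in> segV p \<Longrightarrow> x \<notin> segV y"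
  by (cases p; cases y) auto

lemma noniso_UV:
  assumes ok: "okS T"
  shows "noniso (UV T) = UV (filter_mset big T)"
proof
  show "UV (filter_mset big T) \<subseteq> noniso (UV T)"
  proof
    fix u assume "u \<in> UV (filter_mset big T)"
    then obtain s l where q: "(s,l) \<in># T" "2 \<le> l" "s \<le> u" "u < s + l"
      unfolding UV_def by auto
    have uin: "u \<in> UV T" using q unfolding UV_def by force
    show "u \<in> noniso (UV T)"
    proof (cases "Suc u < s + l")
      case True
      then have "Suc u \<in> UV T" using q unfolding UV_def by force
      then show ?thesis using uin unfolding noniso_def by blast
    next
      case False
      then have "u - 1 \<in> UV T" "u = Suc (u - 1)" using q unfolding UV_def by force+
      then show ?thesis using uin unfolding noniso_def by blast
    qed
  qed
  show "noniso (UV T) \<subseteq> UV (filter_mset big T)"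
  proof
    fix u assume u: "u \<in> noniso (UV T)"
    then obtain s l where q: "(s,l) \<in># T" "s \<le> u" "u < s + l"
      unfolding UV_def noniso_def by auto
    have sp: "\<And>y. y \<in># T - {#(s,l)#} \<Longrightarrow> sep (s,l) y"
      using okS_diff[OF ok q(1)] by blast
    show "u \<in> UV (filter_mset big T)"
    proof (cases "2 \<le> l")
      case True
      then show ?thesis using q unfolding UV_def by force
    next
      case False
      then have l1: "l = 1" "u = s" using q by auto
      from u have "(\<exists>w\<in>UV T. u = Suc w) \<or> Suc u \<in> UV T" unfolding noniso_def by blast
      then have "\<exists>x. x \<notin> segV (s,l) \<and> x \<in> UV T \<and> (x = Suc s \<or> Suc x = s)"
        using l1 by (auto; metis n_not_Suc_n)
      then obtain x y where x: "x \<notin> segV (s,l)" "x \<in> segV y" "y \<in># T" "x = Suc s \<or> Suc x = s"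
        unfolding UV_def by blast
      have "y \<noteq> (s,l)" using x by auto
      then have "y \<in># T - {#(s,l)#}" using x(3) by (simp add: in_diff_count)
      then have "sep (s,l) y" by (rule sp)
      then have False using x l1 by (cases y) auto
      then show ?thesis ..
    qed
  qed
qed

lemma seg_split: "s \<le> v \<Longrightarrow> v < s + l \<Longrightarrow>
   segV (s,l) - {v} = segV (s, v - s) \<union> segV (Suc v, s + l - Suc v)"
  by auto

lemma sep_sub: "sep y (s,l) \<Longrightarrow> s \<le> s' \<Longrightarrow> s' + l' \<le> s + l \<Longrightarrow> sep y (s',l')"
  by (cases y) auto

lemma move_lemma:
  assumes ok: "okS S" and p: "(s,l) \<in># S" and v: "s \<le> v" "v < s + l"
  defines "T \<equiv> add_mset (s, v - s) (add_mset (Suc v, s + l - Suc v) (S - {#(s,l)#}))"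
  shows "UV S - {v} = UV T" "okS T"
proof -
  have d: "okS (S - {#(s,l)#})" "\<And>y. y \<in># S - {#(s,l)#} \<Longrightarrow> sep (s,l) y"
    using okS_diff[OF ok p] by auto
  have S: "S = add_mset (s,l) (S - {#(s,l)#})" using p by simp
  have "UV S = segV (s,l) \<union> UV (S - {#(s,l)#})" by (subst S) simp
  moreover have "v \<notin> UV (S - {#(s,l)#})"
    using d(2) sep_notin v unfolding UV_def by fastforce
  ultimately show "UV S - {v} = UV T"
    unfolding T_def using seg_split[OF v] by auto
  have c1: "sep (s, v - s) y \<and> sep (Suc v, s + l - Suc v) y" if "y \<in># S - {#(s,l)#}" for y
  proof -
    have "sep y (s,l)" using d(2)[OF that] sep_sym[of y "(s,l)"] by simp
    then have "sep y (s, v - s)" "sep y (Suc v, s + l - Suc v)"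
      using sep_sub v by auto
    then show ?thesis using sep_sym by simp
  qed
  show "okS T" unfolding T_def okS_add_mset using d(1) c1 v by auto
qed



definition Brel :: "graph \<Rightarrow> nat multiset \<Rightarrow> bool" where
  "Brel G M \<longleftrightarrow> (\<exists>S. okS S \<and> (\<forall>p\<in>#S. big p) \<and> G = ind (UV S)
       \<and> filter_mset (\<lambda>h. 2 \<le> h) M = image_mset snd S)"

lemma filter_all: "\<forall>p\<in>#S. P p \<Longrightarrow> filter_mset P S = S"
  by (simp add: filter_mset_eq_conv)

lemma grim_step:
  assumes ok: "okS S" and allbig: "\<forall>p\<in>#S. big p" and p: "(s,l) \<in># S"
    and v: "s \<le> v" "v < s + l"
    and M': "filter_mset (\<lambda>h. 2 \<le> h) M' =
       (image_mset snd S - {#l#}) + filter_mset (\<lambda>h. 2 \<le> h) {#v - s, s + l - Suc v#}"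
  shows "Brel (del_isolated (del_vertex v (ind (UV S)))) M'"
proof -
  define T where "T = add_mset (s, v - s) (add_mset (Suc v, s + l - Suc v) (S - {#(s,l)#}))"
  have m: "UV S - {v} = UV T" "okS T" using move_lemma[OF ok p v] unfolding T_def by auto
  have G: "del_isolated (del_vertex v (ind (UV S))) = ind (UV (filter_mset big T))"
    by (simp add: del_vertex_ind del_isolated_ind m noniso_UV)
  have fS: "filter_mset big (S - {#(s,l)#}) = S - {#(s,l)#}"
    using allbig by (intro filter_all) (auto dest: in_diffD)
  have im: "image_mset snd (S - {#(s,l)#}) = image_mset snd S - {#l#}"
    using image_mset_Diff[of "{#(s,l)#}" S snd] p by simp
  have "image_mset snd (filter_mset big T) =
      filter_mset (\<lambda>h. 2 \<le> h) {#v - s, s + l - Suc v#} + (image_mset snd S - {#l#})"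
    unfolding T_def using fS im by simp
  then have "filter_mset (\<lambda>h. 2 \<le> h) M' = image_mset snd (filter_mset big T)"
    using M' by (simp add: add.commute)
  then show ?thesis unfolding Brel_def G
    using okS_filter[OF m(2)] by (intro exI[of _ "filter_mset big T"]) auto
qed

lemma filter_move: "h \<in># M \<Longrightarrow> 2 \<le> (h::nat) \<Longrightarrow>
  filter_mset (\<lambda>h. 2 \<le> h) (M - {#h#} + X) = filter_mset (\<lambda>h. 2 \<le> h) M - {#h#} + filter_mset (\<lambda>h. 2 \<le> h) X"
  by simp

lemma sim1:
  assumes B: "Brel G M" and mv: "(G', G) \<in> grim_rel"
  shows "\<exists>M'. (M', M) \<in> octal6_rel \<and> Brel G' M'"
proof -
  obtain S where S: "okS S" "\<forall>p\<in>#S. big p" "G = ind (UV S)"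
    "filter_mset (\<lambda>h. 2 \<le> h) M = image_mset snd S"
    using B unfolding Brel_def by blast
  obtain v where v: "v \<in> UV S" "G' = del_isolated (del_vertex v (ind (UV S)))"
    using mv S(3) unfolding grim_rel_def grim_moves_def by (auto simp: ind_def)
  obtain s l where p: "(s,l) \<in># S" "s \<le> v" "v < s + l"
    using v(1) unfolding UV_def by auto
  have l2: "2 \<le> l" using S(2) p(1) by force
  have "l \<in># filter_mset (\<lambda>h. 2 \<le> h) M" unfolding S(4) using p(1) by force
  then have lM: "l \<in># M" by simp
  define a where "a = v - s"
  define b where "b = s + l - Suc v"
  have ab: "a + b + 1 = l" unfolding a_def b_def using p by auto
  show ?thesis
  proof (cases "a = 0 \<or> b = 0")
    case True
    define M' where "M' = M - {#l#} + {#l - 1#}"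
    have "M' \<in> octal6_moves M" unfolding octal6_moves_def M'_def
      using lM l2 by (intro UnI1 CollectI exI[of _ l] exI[of _ "l - 1"]) auto
    moreover have "Brel G' M'"
      unfolding v(2)
    proof (rule grim_step[OF S(1) S(2) p])
      have "filter_mset (\<lambda>h. 2 \<le> h) {#l - 1#} = filter_mset (\<lambda>h. 2 \<le> h) {#v - s, s + l - Suc v#}"
        using True ab unfolding a_def[symmetric] b_def[symmetric] by auto
      then show "filter_mset (\<lambda>h. 2 \<le> h) M' =
         image_mset snd S - {#l#} + filter_mset (\<lambda>h. 2 \<le> h) {#v - s, s + l - Suc v#}"
        unfolding M'_def filter_move[OF lM l2] S(4) using l2 by simp
    qed
    ultimately show ?thesis unfolding octal6_rel_def by blast
  next
    case False
    define M' where "M' = M - {#l#} + {#a, b#}"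
    have "M' \<in> octal6_moves M" unfolding octal6_moves_def M'_def
      using lM False ab by (intro UnI2 CollectI exI[of _ l] exI[of _ a] exI[of _ b]) auto
    moreover have "Brel G' M'"
      unfolding v(2)
      by (rule grim_step[OF S(1) S(2) p]) (use l2 in \<open>simp add: M'_def filter_move[OF lM l2] S(4) a_def b_def\<close>)
    ultimately show ?thesis unfolding octal6_rel_def by blast
  qed
qed



lemma sim2:
  assumes B: "Brel G M" and mv: "(M', M) \<in> octal6_rel"
  shows "\<exists>G'. (G', G) \<in> grim_rel \<and> Brel G' M'"
proof -
  obtain S where S: "okS S" "\<forall>p\<in>#S. big p" "G = ind (UV S)"
    "filter_mset (\<lambda>h. 2 \<le> h) M = image_mset snd S"
    using B unfolding Brel_def by blast
  have fin: "finite (fst G)" using S(3) finite_UV by (simp add: ind_def)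
  have mvG: "(del_isolated (del_vertex v G), G) \<in> grim_rel" if "v \<in> UV S" for v
    using fin that S(3) unfolding grim_rel_def grim_moves_def by (auto simp: ind_def)
  have getp: "\<exists>s. (s,h) \<in># S" if "h \<in># M" "2 \<le> h" for h
  proof -
    have "h \<in># image_mset snd S" unfolding S(4)[symmetric] using that by simp
    then show ?thesis by force
  qed
  from mv consider (one) h a where "h \<in># M" "1 \<le> a" "a + 1 = h" "M' = M - {#h#} + {#a#}"
    | (two) h a b where "h \<in># M" "1 \<le> a" "1 \<le> b" "a + b + 1 = h" "M' = M - {#h#} + {#a, b#}"
    unfolding octal6_rel_def octal6_moves_def by blast
  then show ?thesis
  proof cases
    case one
    have h2: "2 \<le> h" using one by simp
    obtain s where p: "(s,h) \<in># S" using getp[OF one(1) h2] by blast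
    have vin: "s \<in> UV S" using p h2 unfolding UV_def by force
    have "Brel (del_isolated (del_vertex s (ind (UV S)))) M'"
    proof (rule grim_step[OF S(1) S(2) p])
      show "s \<le> s" "s < s + h" using h2 by auto
      show "filter_mset (\<lambda>h. 2 \<le> h) M' =
         image_mset snd S - {#h#} + filter_mset (\<lambda>h. 2 \<le> h) {#s - s, s + h - Suc s#}"
        proof -
        have e: "s + h - Suc s = a" "s - s = 0" using one by auto
        show ?thesis unfolding one(4) filter_move[OF one(1) h2] S(4) e using h2 by simp
      qed
    qed
    then show ?thesis using mvG[OF vin] S(3) by blast
  next
    case two
    have h2: "2 \<le> h" using two by simp
    obtain s where p: "(s,h) \<in># S" using getp[OF two(1) h2] by blast
    have vin: "s + a \<in> UV S" using p two unfolding UV_def by force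
    have "Brel (del_isolated (del_vertex (s + a) (ind (UV S)))) M'"
    proof (rule grim_step[OF S(1) S(2) p])
      show "s \<le> s + a" "s + a < s + h" using two by auto
      show "filter_mset (\<lambda>h. 2 \<le> h) M' =
         image_mset snd S - {#h#} + filter_mset (\<lambda>h. 2 \<le> h) {#s + a - s, s + h - Suc (s + a)#}"
        proof -
        have e: "s + h - Suc (s + a) = b" "s + a - s = a" using two by auto
        show ?thesis unfolding two(5) filter_move[OF two(1) h2] S(4) e using h2 by simp
      qed
    qed
    then show ?thesis using mvG[OF vin] S(3) by blast
  qed
qed

lemma start: "Brel (grim_path n) (octal_heap n)"
proof -
  have ok: "okS {#(0,n)#}" by (simp add: okS_add_mset)
  have UV0: "UV {#(0,n)#} = {..<n}" by auto
  have g: "grim_path n = ind (UV (filter_mset big {#(0,n)#}))"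
    unfolding grim_path_def path_ind del_isolated_ind
    using noniso_UV[OF ok] UV0 by simp
  show ?thesis unfolding Brel_def
    apply (rule exI[of _ "filter_mset big {#(0,n)#}"])
    using okS_filter[OF ok] g ok by (auto simp: octal_heap_def)
qed


theorem theorem5p4:
  fixes n :: nat
  shows "SG grim_rel (grim_path n) = SG octal6_rel (octal_heap n)"
  proof (rule SG_bisim[OF wf_grim wf_octal, where B=Brel])
  show "\<And>x y x'. Brel x y \<Longrightarrow> (x', x) \<in> grim_rel \<Longrightarrow> \<exists>y'. (y', y) \<in> octal6_rel \<and> Brel x' y'"
    by (rule sim1)
  show "\<And>x y y'. Brel x y \<Longrightarrow> (y', y) \<in> octal6_rel \<Longrightarrow> \<exists>x'. (x', x) \<in> grim_rel \<and> Brel x' y'"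
    by (rule sim2)
  show "Brel (grim_path n) (octal_heap n)" by (rule start)
qed

end
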